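(* Let $(X,d)$ be a compact metric space with $\operatorname{diam}(X,d)=1/2$ and let $\mathcal S$ be its hyperbolic filling with horizontal parameter $\lambda>1$ and vertical parameter $a>1$. (a) If $(z,n+1)$ is a child of $(x,n)$, then $d(x,z)<a^{-n}$. If $(y,k)$ is a descendant of $(x,n)$ (for some $k>n$), then $d(x,y)<\frac{a}{a-1}a^{-n}$. (b) If $\lambda\ge2+2\lambda a^{-1}$ and $D_2((x,n+1),(y,n+1))\le1$, then $D_2((x_0,n),(y_0,n))\le1$, where $(x_0,n),(y_0,n)$ are the parents of $(x,n+1),(y,n+1)$. Similarly, if $\lambda\ge2+4\lambda a^{-1}$ and $D_2((x,n+1),(y,n+1))\le2$, then $D_2((x_0,n),(y_0,n))\le1$. (c) Let $\lambda\ge6$. If $(x,n+1),(y,n+1)\in\mathcal S_{n+1}$ satisfy $d(x,y)\le4a^{-n}$ and $(x_0,n),(y_0,n)$ are their parents, then $D_2((x_0,n),(y_0,n))\le1$. (d) If $\lambda>1+a^{-1}$, then $D_1\le D_2\le2D_1$. (e) Let $\lambda>1+a^{-1}$. If $w\in\mathcal S_{n+1}$ and $u,v\in\mathcal S_n$ satisfy $D_1(u,w)=1$ and $D_2(v,w)=1$, then $D_2(u,v)\le1$.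
   Context: Hyperbolic filling: fix an increasing sequence $X_0\subset X_1\subset\cdots$ with each $X_n$ a maximal $a^{-n}$-separated subset of $X$ (distinct points at distance $\ge a^{-n}$, maximal for inclusion). $\mathcal S_n=\{(x,n):x\in X_n\}$, $\mathcal S=\bigcup_{n\ge0}\mathcal S_n$. For each $(x,n)$ with $n\ge1$ a parent $(y,n-1)\in\mathcal S_{n-1}$ is fixed with $d(x,y)=\min_{z\in X_{n-1}}d(x,z)$; $(x,n)$ is then a child of $(y,n-1)$; $(x,n)$ is a descendant of $(y,k)$, $n>k$, if they are linked by a chain of parent–child relations. $D_1$ is the graph distance of the graph on $\mathcal S$ where distinct $(x,n),(y,m)$ are adjacent iff either $n=m$ and $B(x,\lambda a^{-n})\cap B(y,\lambda a^{-n})\ne\emptyset$, or $|n-m|=1$ and $B(x,a^{-n})\cap B(y,a^{-m})\ne\emptyset$. $D_2$ is the graph distance of the graph on $\mathcal S$ whose edges are the parent–child pairs and the pairs of distinct $(x,n),(y,n)$ with $B(x,\lambda a^{-n})\cap B(y,\lambda a^{-n})\neq\emptyset$. *)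

theory Defs
  imports "HOL-Analysis.Analysis" "HOL-Library.Extended_Nat"
begin

definition separated :: "'a::metric_space set \<Rightarrow> real \<Rightarrow> bool" where
  "separated A r \<longleftrightarrow> (\<forall>x\<in>A. \<forall>y\<in>A. x \<noteq> y \<longrightarrow> r \<le> dist x y)"

definition max_separated :: "'a::metric_space set \<Rightarrow> 'a set \<Rightarrow> real \<Rightarrow> bool" where
  "max_separated X A r \<longleftrightarrow> A \<subseteq> X \<and> separated A r \<and>
     (\<forall>B. A \<subseteq> B \<and> B \<subseteq> X \<and> separated B r \<longrightarrow> B = A)"

text \<open>Data of a hyperbolic filling: the increasing sequence Xs of maximal
  a^-n separated sets, and a fixed parent choice: the parent of (x, Suc n)
  is (par x (Suc n), n), a nearest point of Xs n.\<close>
definition hyp_filling ::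
  "'a::metric_space set \<Rightarrow> real \<Rightarrow> (nat \<Rightarrow> 'a set) \<Rightarrow> ('a \<Rightarrow> nat \<Rightarrow> 'a) \<Rightarrow> bool" where
  "hyp_filling X a Xs par \<longleftrightarrow>
     (\<forall>n. max_separated X (Xs n) (1 / a ^ n)) \<and>
     (\<forall>n. Xs n \<subseteq> Xs (Suc n)) \<and>
     (\<forall>n. \<forall>x\<in>Xs (Suc n). par x (Suc n) \<in> Xs n \<and>
          (\<forall>z\<in>Xs n. dist x (par x (Suc n)) \<le> dist x z))"

definition Sset :: "(nat \<Rightarrow> 'a set) \<Rightarrow> ('a \<times> nat) set" where
  "Sset Xs = {(x, n). x \<in> Xs n}"

fun anc :: "('a \<Rightarrow> nat \<Rightarrow> 'a) \<Rightarrow> 'a \<Rightarrow> nat \<Rightarrow> nat \<Rightarrow> 'a" where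
  "anc par y k 0 = y"
| "anc par y k (Suc j) = anc par (par y k) (k - 1) j"

definition descendant :: "('a \<Rightarrow> nat \<Rightarrow> 'a) \<Rightarrow> 'a \<times> nat \<Rightarrow> 'a \<times> nat \<Rightarrow> bool" where
  "descendant par v u \<longleftrightarrow> snd u < snd v \<and> anc par (fst v) (snd v) (snd v - snd u) = fst u"

definition gdist :: "('v \<Rightarrow> 'v \<Rightarrow> bool) \<Rightarrow> 'v \<Rightarrow> 'v \<Rightarrow> enat" where
  "gdist E u v = Inf {enat k | k. (E ^^ k) u v}"

definition D1edge ::
  "'a::metric_space set \<Rightarrow> real \<Rightarrow> real \<Rightarrow> (nat \<Rightarrow> 'a set) \<Rightarrow> 'a \<times> nat \<Rightarrow> 'a \<times> nat \<Rightarrow> bool" where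
  "D1edge X a lam Xs u v \<longleftrightarrow> u \<in> Sset Xs \<and> v \<in> Sset Xs \<and> u \<noteq> v \<and>
     (let x = fst u; n = snd u; y = fst v; m = snd v in
       (n = m \<and> ball x (lam / a ^ n) \<inter> ball y (lam / a ^ n) \<inter> X \<noteq> {}) \<or>
       ((n = Suc m \<or> m = Suc n) \<and> ball x (1 / a ^ n) \<inter> ball y (1 / a ^ m) \<inter> X \<noteq> {}))"

definition D2edge ::
  "'a::metric_space set \<Rightarrow> real \<Rightarrow> real \<Rightarrow> (nat \<Rightarrow> 'a set) \<Rightarrow> ('a \<Rightarrow> nat \<Rightarrow> 'a)
     \<Rightarrow> 'a \<times> nat \<Rightarrow> 'a \<times> nat \<Rightarrow> bool" where
  "D2edge X a lam Xs par u v \<longleftrightarrow> u \<in> Sset Xs \<and> v \<in> Sset Xs \<and> u \<noteq> v \<and>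
     (let x = fst u; n = snd u; y = fst v; m = snd v in
       (m = Suc n \<and> par y m = x) \<or>
       (n = Suc m \<and> par x n = y) \<or>
       (n = m \<and> ball x (lam / a ^ n) \<inter> ball y (lam / a ^ n) \<inter> X \<noteq> {}))"

definition D1 where "D1 X a lam Xs = gdist (D1edge X a lam Xs)"
definition D2 where "D2 X a lam Xs par = gdist (D2edge X a lam Xs par)"

end

theory Submission
  imports Defs
begin


lemma gdist_le: fixes E :: "'v \<Rightarrow> 'v \<Rightarrow> bool" shows "(E ^^ k) u v \<Longrightarrow> gdist E u v \<le> enat k"
  unfolding gdist_def by (rule Inf_lower) auto

lemma gdist_leD:
  fixes E :: "'v \<Rightarrow> 'v \<Rightarrow> bool"
  assumes "gdist E u v \<le> enat k" shows "\<exists>j\<le>k. (E ^^ j) u v"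
proof -
  let ?S = "{enat k | k. (E ^^ k) u v}"
  have ne: "?S \<noteq> {}"
  proof
    assume "?S = {}"
    then have "gdist E u v = \<infinity>" unfolding gdist_def by (simp add: Inf_enat_def)
    with assms show False by simp
  qed
  then have "Inf ?S \<in> ?S" unfolding Inf_enat_def by (auto intro: LeastI)
  then obtain m where m: "(E ^^ m) u v" "gdist E u v = enat m" unfolding gdist_def by auto
  with assms show ?thesis by auto
qed

lemma gdist_1D: fixes E :: "'v \<Rightarrow> 'v \<Rightarrow> bool" shows "gdist E u v = 1 \<Longrightarrow> E u v"
proof -
  assume h: "gdist E u v = 1"
  then obtain j where "j \<le> 1" "(E ^^ j) u v" using gdist_leD[of E u v 1] by (auto simp: one_enat_def)
  moreover have "j \<noteq> 0"
  proof
    assume "j = 0"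
    with \<open>(E ^^ j) u v\<close> have "gdist E u v \<le> 0" using gdist_le[where E=E and k=0 and u=u and v=v] by (simp add: zero_enat_def)
    with h show False by simp
  qed
  ultimately have "j = 1" by simp
  with \<open>(E ^^ j) u v\<close> show ?thesis by (metis relpowp_1)
qed

lemma relpowp_mono_rel:
  fixes E F :: "'v \<Rightarrow> 'v \<Rightarrow> bool"
  assumes "\<And>u v. E u v \<Longrightarrow> F u v"
  shows "(E ^^ k) u v \<Longrightarrow> (F ^^ k) u v"
proof (induction k arbitrary: v)
  case 0 then show ?case by simp
next
  case (Suc k)
  then obtain w where "(E ^^ k) u w" "E w v" by auto
  then show ?case using Suc.IH assms by auto
qed

lemma relpowp_double:
  fixes E F :: "'v \<Rightarrow> 'v \<Rightarrow> bool"
  assumes "\<And>u v. E u v \<Longrightarrow> \<exists>j\<le>2. (F ^^ j) u v"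
  shows "(E ^^ k) u v \<Longrightarrow> \<exists>j\<le>2*k. (F ^^ j) u v"
proof (induction k arbitrary: v)
  case 0 then show ?case by simp
next
  case (Suc k)
  then obtain w where "(E ^^ k) u w" "E w v" by auto
  then obtain j1 j2 where "j1 \<le> 2*k" "(F ^^ j1) u w" "j2 \<le> 2" "(F ^^ j2) w v"
    using Suc.IH assms by blast
  then have "(F ^^ (j1 + j2)) u v" by (metis relpowp_add relcomppI)
  then show ?case using \<open>j1 \<le> 2*k\<close> \<open>j2 \<le> 2\<close> by (intro exI[of _ "j1+j2"]) auto
qed

lemma hf_near:
  assumes hf: "hyp_filling X a Xs par" and a: "a > 1" and z: "z \<in> X"
  shows "\<exists>x\<in>Xs n. dist z x < 1 / a ^ n"
proof (rule ccontr)
  assume "\<not> ?thesis"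
  then have far: "\<forall>x\<in>Xs n. 1 / a ^ n \<le> dist z x" by auto
  have ms: "max_separated X (Xs n) (1 / a ^ n)" using hf unfolding hyp_filling_def by auto
  have pos: "0 < 1 / a ^ n" using a by simp
  have zn: "z \<notin> Xs n" using far pos by fastforce
  have "separated (insert z (Xs n)) (1 / a ^ n)"
    using ms far unfolding max_separated_def separated_def by (auto simp: dist_commute)
  moreover have "insert z (Xs n) \<subseteq> X" using ms z unfolding max_separated_def by auto
  ultimately have "insert z (Xs n) = Xs n" using ms unfolding max_separated_def by blast
  with zn show False by auto
qed

lemma hf_sub: "hyp_filling X a Xs par \<Longrightarrow> Xs n \<subseteq> X"
  unfolding hyp_filling_def max_separated_def by auto

lemma hf_par:
  assumes hf: "hyp_filling X a Xs par" and a: "a > 1" and x: "x \<in> Xs (Suc n)"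
  shows "par x (Suc n) \<in> Xs n \<and> dist x (par x (Suc n)) < 1 / a ^ n"
proof -
  have xX: "x \<in> X" using hf_sub[OF hf] x by auto
  obtain z where z: "z \<in> Xs n" "dist x z < 1 / a ^ n" using hf_near[OF hf a xX] by blast
  have "par x (Suc n) \<in> Xs n" "dist x (par x (Suc n)) \<le> dist x z"
    using hf x z unfolding hyp_filling_def by auto
  with z show ?thesis by auto
qed

lemma hf_anc:
  assumes hf: "hyp_filling X a Xs par" and a: "a > 1"
  shows "y \<in> Xs k \<Longrightarrow> j \<le> k \<Longrightarrow> anc par y k j \<in> Xs (k - j) \<and>
     dist y (anc par y k j) \<le> a / (a - 1) * (1 / a ^ (k - j) - 1 / a ^ k)"
proof (induction j arbitrary: y k)
  case 0 then show ?case by simp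
next
  case (Suc j)
  then obtain k' where k: "k = Suc k'" by (cases k) auto
  have p: "par y (Suc k') \<in> Xs k'" "dist y (par y (Suc k')) < 1 / a ^ k'"
    using hf_par[OF hf a] Suc.prems k by auto
  have ih: "anc par (par y (Suc k')) k' j \<in> Xs (k' - j) \<and>
     dist (par y (Suc k')) (anc par (par y (Suc k')) k' j) \<le> a / (a - 1) * (1 / a ^ (k' - j) - 1 / a ^ k')"
    using Suc.IH[OF p(1)] Suc.prems k by auto
  have eq: "a / (a - 1) * (1 / a ^ k' - 1 / a ^ Suc k') = 1 / a ^ k'"
    using a by (simp add: field_simps)
  have "dist y (anc par (par y (Suc k')) k' j) \<le> 1 / a ^ k' + a / (a - 1) * (1 / a ^ (k' - j) - 1 / a ^ k')"
    using dist_triangle[of y "anc par (par y (Suc k')) k' j" "par y (Suc k')"] p ih by linarith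
  also have "\<dots> = a / (a - 1) * (1 / a ^ (k' - j) - 1 / a ^ Suc k')"
    using eq by (simp add: algebra_simps)
  finally show ?case using ih k by simp
qed


lemma path1: fixes E :: "'v \<Rightarrow> 'v \<Rightarrow> bool" shows "E u v \<Longrightarrow> (E ^^ 1) u v" by (metis relpowp_1)

lemma path2: "E u w \<Longrightarrow> E w v \<Longrightarrow> (E ^^ 2) u v"
  by (auto simp: numeral_2_eq_2 relcompp_apply)

lemma path2D: "(E ^^ 2) u v \<Longrightarrow> \<exists>w. E u w \<and> E w v"
  by (auto simp: numeral_2_eq_2 relcompp_apply)

lemma D2edge_cases:
  assumes "D2edge X a lam Xs par (x,n) (y,m)"
  shows "x \<in> Xs n \<and> y \<in> Xs m \<and> (x,n) \<noteq> (y,m) \<and> ((m = Suc n \<and> par y m = x) \<or> (n = Suc m \<and> par x n = y)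
     \<or> (n = m \<and> (\<exists>p\<in>X. dist x p < lam / a ^ n \<and> dist y p < lam / a ^ n)))"
  using assms unfolding D2edge_def Let_def Sset_def by (auto simp: mem_ball)

lemma D2edge_horiz:
  assumes "x \<in> Xs n" "y \<in> Xs n" "x \<noteq> y" "p \<in> X" "dist x p < lam / a ^ n" "dist y p < lam / a ^ n"
  shows "D2edge X a lam Xs par (x,n) (y,n)"
proof -
  have "p \<in> ball x (lam / a ^ n) \<inter> ball y (lam / a ^ n) \<inter> X" using assms by (auto simp: mem_ball)
  then show ?thesis using assms unfolding D2edge_def Let_def Sset_def by auto
qed

lemma D2edge_par:
  assumes "x \<in> Xs (Suc n)" "par x (Suc n) \<in> Xs n"
  shows "D2edge X a lam Xs par (x, Suc n) (par x (Suc n), n)"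
    "D2edge X a lam Xs par (par x (Suc n), n) (x, Suc n)"
  using assms unfolding D2edge_def Let_def Sset_def by auto

lemma D2edge_sym: "D2edge X a lam Xs par u v \<Longrightarrow> D2edge X a lam Xs par v u"
  unfolding D2edge_def Let_def by (auto simp: Int_commute Int_left_commute)

lemma D1edge_cases:
  assumes "D1edge X a lam Xs (x,n) (y,m)"
  shows "x \<in> Xs n \<and> y \<in> Xs m \<and> (x,n) \<noteq> (y,m) \<and>
     ((n = m \<and> (\<exists>p\<in>X. dist x p < lam / a ^ n \<and> dist y p < lam / a ^ n)) \<or>
      ((n = Suc m \<or> m = Suc n) \<and> dist x y < 1 / a ^ n + 1 / a ^ m))"
proof -
  have h: "x \<in> Xs n \<and> y \<in> Xs m \<and> (x,n) \<noteq> (y,m) \<and>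
     ((n = m \<and> (\<exists>p\<in>X. dist x p < lam / a ^ n \<and> dist y p < lam / a ^ n)) \<or>
      ((n = Suc m \<or> m = Suc n) \<and> (\<exists>p. dist x p < 1 / a ^ n \<and> dist y p < 1 / a ^ m)))"
    using assms unfolding D1edge_def Let_def Sset_def by (auto simp: mem_ball)
  have "dist x y < 1 / a ^ n + 1 / a ^ m" if "dist x p < 1 / a ^ n" "dist y p < 1 / a ^ m" for p
    using dist_triangle[of x y p] that by (simp add: dist_commute)
  with h show ?thesis by blast
qed

lemma D2_horiz:
  assumes "x \<in> Xs n" "y \<in> Xs n" "p \<in> X" "dist x p < lam / a ^ n" "dist y p < lam / a ^ n"
  shows "D2 X a lam Xs par (x,n) (y,n) \<le> 1"
proof (cases "x = y")
  case True
  then have "D2 X a lam Xs par (x,n) (y,n) \<le> enat 0" unfolding D2_def by (intro gdist_le) simp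
  then show ?thesis by (simp add: zero_enat_def[symmetric])
next
  case False
  have "D2edge X a lam Xs par (x,n) (y,n)"
    using D2edge_horiz[where X=X and a=a and lam=lam and Xs=Xs and par=par and n=n] assms False by blast
  then have "D2 X a lam Xs par (x,n) (y,n) \<le> enat 1" unfolding D2_def
    by (intro gdist_le path1)
  then show ?thesis by (simp add: one_enat_def)
qed

lemma parents_close:
  assumes hf: "hyp_filling X a Xs par" and a: "a > 1" and lam: "lam \<ge> 1"
    and x: "x \<in> Xs (Suc n)" and y: "y \<in> Xs (Suc n)" and d: "dist x y \<le> r"
    and r: "1 / a ^ n + r \<le> lam / a ^ n"
  shows "D2 X a lam Xs par (par x (Suc n), n) (par y (Suc n), n) \<le> 1"
proof -
  have px: "par x (Suc n) \<in> Xs n \<and> dist x (par x (Suc n)) < 1 / a ^ n" using hf_par[OF hf a x] .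
  have py: "par y (Suc n) \<in> Xs n \<and> dist y (par y (Suc n)) < 1 / a ^ n" using hf_par[OF hf a y] .
  have xX: "x \<in> X" using hf_sub[OF hf] x by auto
  have "1 / a ^ n \<le> lam / a ^ n" using lam a by (simp add: divide_right_mono)
  then have d1: "dist (par x (Suc n)) x < lam / a ^ n" using px by (simp add: dist_commute)
  have "dist (par y (Suc n)) x \<le> dist y (par y (Suc n)) + dist x y"
    using dist_triangle[of "par y (Suc n)" x y] by (simp add: dist_commute)
  then have d2: "dist (par y (Suc n)) x < lam / a ^ n" using py d r by linarith
  show ?thesis using D2_horiz[where X=X and a=a and lam=lam and Xs=Xs and par=par and n=n] px py xX d1 d2 by blast
qed

lemma D2edge_same_level_dist:
  assumes "D2edge X a lam Xs par (x, n) (y, n)"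
  shows "dist x y < 2 * lam / a ^ n"
proof -
  obtain p where "dist x p < lam / a ^ n" "dist y p < lam / a ^ n"
    using D2edge_cases[OF assms] by auto
  then show ?thesis using dist_triangle[of x y p] by (simp add: dist_commute)
qed

lemma same_parent_D2:
  "D2 X a lam Xs par (z, n) (z, n) \<le> 1"
proof -
  have "D2 X a lam Xs par (z,n) (z,n) \<le> enat 0" unfolding D2_def by (intro gdist_le) simp
  then show ?thesis by (simp add: zero_enat_def[symmetric])
qed

lemma partB1:
  assumes hf: "hyp_filling X a Xs par" and a: "a > 1" and lam1: "lam > 1"
    and x: "x \<in> Xs (Suc n)" and y: "y \<in> Xs (Suc n)" and lam: "lam \<ge> 2 + 2 * lam / a"
    and D: "D2 X a lam Xs par (x, Suc n) (y, Suc n) \<le> 1"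
  shows "D2 X a lam Xs par (par x (Suc n), n) (par y (Suc n), n) \<le> 1"
proof -
  obtain j where j: "j \<le> 1" "(D2edge X a lam Xs par ^^ j) (x, Suc n) (y, Suc n)"
    using gdist_leD[of "D2edge X a lam Xs par" "(x, Suc n)" "(y, Suc n)" 1] D
    unfolding D2_def by (auto simp: one_enat_def)
  show ?thesis
  proof (cases "j = 0")
    case True
    with j have "x = y" by simp
    then show ?thesis using same_parent_D2 by simp
  next
    case False
    with j have "j = 1" by simp
    with j have E: "D2edge X a lam Xs par (x, Suc n) (y, Suc n)" by (metis relpowp_1)
    have "dist x y \<le> 2 * lam / a ^ Suc n" using D2edge_same_level_dist[OF E] by simp
    moreover have "1 / a ^ n + 2 * lam / a ^ Suc n \<le> lam / a ^ n"
    proof -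
      have "1 / a ^ n + 2 * lam / a ^ Suc n = (1 + 2 * lam / a) / a ^ n" using a by (simp add: field_simps)
      also have "\<dots> \<le> lam / a ^ n" using lam a by (intro divide_right_mono) auto
      finally show ?thesis .
    qed
    ultimately show ?thesis using parents_close[OF hf a _ x y] lam1 by auto
  qed
qed

lemma partB2:
  assumes hf: "hyp_filling X a Xs par" and a: "a > 1" and lam1: "lam > 1"
    and x: "x \<in> Xs (Suc n)" and y: "y \<in> Xs (Suc n)" and lam: "lam \<ge> 2 + 4 * lam / a"
    and D: "D2 X a lam Xs par (x, Suc n) (y, Suc n) \<le> 2"
  shows "D2 X a lam Xs par (par x (Suc n), n) (par y (Suc n), n) \<le> 1"
proof -
  have rr: "1 / a ^ n + 4 * lam / a ^ Suc n \<le> lam / a ^ n"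
  proof -
    have "1 / a ^ n + 4 * lam / a ^ Suc n = (1 + 4 * lam / a) / a ^ n" using a by (simp add: field_simps)
    also have "\<dots> \<le> lam / a ^ n" using lam a by (intro divide_right_mono) auto
    finally show ?thesis .
  qed
  have mono: "2 * lam / a ^ Suc n \<le> 4 * lam / a ^ Suc n" using lam1 a by (simp add: divide_right_mono)
  obtain j where j: "j \<le> 2" "(D2edge X a lam Xs par ^^ j) (x, Suc n) (y, Suc n)"
    using gdist_leD[of "D2edge X a lam Xs par" "(x, Suc n)" "(y, Suc n)" 2] D
    unfolding D2_def by (auto simp: numeral_eq_enat)
  have j012: "j = 0 \<or> j = 1 \<or> j = 2" using j(1) by auto
  show ?thesis
  proof -
    { assume "j = 0"
      with j have "x = y" by simp
      then have ?thesis using same_parent_D2 by simp }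
    moreover
    { assume "j = 1"
      with j have E: "D2edge X a lam Xs par (x, Suc n) (y, Suc n)" by (metis relpowp_1)
      have "dist x y \<le> 4 * lam / a ^ Suc n" using D2edge_same_level_dist[OF E] mono by simp
      then have ?thesis using parents_close[OF hf a _ x y _ rr] lam1 by auto }
    moreover
    { assume "j = 2"
      with j obtain w where w: "D2edge X a lam Xs par (x, Suc n) w" "D2edge X a lam Xs par w (y, Suc n)"
        using path2D by metis
      obtain wx m where wdef: "w = (wx, m)" by (cases w)
      note c1 = D2edge_cases[OF w(1)[unfolded wdef]]
      note c2 = D2edge_cases[OF w(2)[unfolded wdef]]
      have ?thesis
      proof -
        { assume "m = n"
          then have "par x (Suc n) = wx" "par y (Suc n) = wx" using c1 c2 by auto
          then have ?thesis using same_parent_D2 by simp }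
        moreover
        { assume "m = Suc (Suc n)"
          then have "x = y" using c1 c2 by auto
          then have ?thesis using same_parent_D2 by simp }
        moreover
        { assume m: "m = Suc n"
          have "dist x wx < 2 * lam / a ^ Suc n" using D2edge_same_level_dist w(1) wdef m by blast
          moreover have "dist wx y < 2 * lam / a ^ Suc n" using D2edge_same_level_dist w(2) wdef m by blast
          ultimately have "dist x y \<le> 4 * lam / a ^ Suc n" using dist_triangle[of x y wx] by simp
          then have ?thesis using parents_close[OF hf a _ x y _ rr] lam1 by auto }
        moreover have "m = n \<or> m = Suc (Suc n) \<or> m = Suc n" using c1 by auto
        ultimately show ?thesis by blast
      qed }
    ultimately show ?thesis using j012 by blast
  qed
qed

lemma partC:
  assumes hf: "hyp_filling X a Xs par" and a: "a > 1"
    and lam: "lam \<ge> 6" and x: "x \<in> Xs (Suc n)" and y: "y \<in> Xs (Suc n)" and d: "dist x y \<le> 4 / a ^ n"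
  shows "D2 X a lam Xs par (par x (Suc n), n) (par y (Suc n), n) \<le> 1"
proof -
  have "1 / a ^ n + 4 / a ^ n \<le> lam / a ^ n"
    using lam a by (simp add: divide_right_mono add_divide_distrib[symmetric])
  then show ?thesis using parents_close[OF hf a _ x y d] lam by auto
qed


lemma partA1:
  assumes hf: "hyp_filling X a Xs par" and a: "a > 1"
    and "x \<in> Xs n" "z \<in> Xs (Suc n)" "par z (Suc n) = x"
  shows "dist x z < 1 / a ^ n"
  using hf_par[OF hf a assms(4)] assms(5) by (simp add: dist_commute)

lemma partA2:
  assumes hf: "hyp_filling X a Xs par" and a: "a > 1"
    and x: "x \<in> Xs n" and y: "y \<in> Xs k" and d: "descendant par (y, k) (x, n)"
  shows "dist x y < a / (a - 1) * (1 / a ^ n)"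
proof -
  have nk: "n < k" and an: "anc par y k (k - n) = x" using d unfolding descendant_def by auto
  have "dist y x \<le> a / (a - 1) * (1 / a ^ n - 1 / a ^ k)"
    using hf_anc[OF hf a y, of "k - n"] nk an by auto
  also have "\<dots> < a / (a - 1) * (1 / a ^ n)"
    using a by (intro mult_strict_left_mono) auto
  finally show ?thesis by (simp add: dist_commute)
qed

lemma vert_close:
  assumes hf: "hyp_filling X a Xs par" and a: "a > 1" and lam: "lam > 1 + 1 / a"
    and x: "x \<in> Xs (Suc m)" and y: "y \<in> Xs m" and d: "dist x y < 1 / a ^ Suc m + 1 / a ^ m"
  shows "D2edge X a lam Xs par (x, Suc m) (par x (Suc m), m) \<and>
    (par x (Suc m) = y \<or> D2edge X a lam Xs par (par x (Suc m), m) (y, m))"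
proof -
  have px: "par x (Suc m) \<in> Xs m \<and> dist x (par x (Suc m)) < 1 / a ^ m" using hf_par[OF hf a x] .
  have xX: "x \<in> X" using hf_sub[OF hf] x by auto
  have lam1: "lam > 1" using lam a by (smt (verit) divide_pos_pos)
  have e1: "1 / a ^ m < lam / a ^ m" using lam1 a by (simp add: divide_strict_right_mono)
  have e2: "1 / a ^ Suc m + 1 / a ^ m = (1 + 1 / a) / a ^ m" using a by (simp add: field_simps)
  have e3: "(1 + 1 / a) / a ^ m < lam / a ^ m" using lam a by (simp add: divide_strict_right_mono)
  have d1: "dist (par x (Suc m)) x < lam / a ^ m" using px e1 by (simp add: dist_commute)
  have d2: "dist y x < lam / a ^ m" using d e2 e3 by (simp add: dist_commute)
  have "par x (Suc m) \<noteq> y \<Longrightarrow> D2edge X a lam Xs par (par x (Suc m), m) (y, m)"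
    using D2edge_horiz[where X=X and a=a and lam=lam and Xs=Xs and par=par and n=m] px y xX d1 d2 by blast
  moreover have "D2edge X a lam Xs par (x, Suc m) (par x (Suc m), m)"
    using D2edge_par(1)[where X=X and a=a and lam=lam and Xs=Xs and par=par and n=m] x px by blast
  ultimately show ?thesis by blast
qed

lemma D2edge_D1edge:
  assumes hf: "hyp_filling X a Xs par" and a: "a > 1" and E: "D2edge X a lam Xs par u v"
  shows "D1edge X a lam Xs u v"
proof -
  obtain x n y m where uv: "u = (x, n)" "v = (y, m)" by (cases u, cases v) auto
  note c = D2edge_cases[OF E[unfolded uv]]
  have base: "u \<in> Sset Xs" "v \<in> Sset Xs" "u \<noteq> v" using c uv unfolding Sset_def by auto
  { assume h: "m = Suc n" "par y m = x"
    have yX: "y \<in> X" using hf_sub[OF hf] c by auto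
    have "dist x y < 1 / a ^ n" using hf_par[OF hf a, of y n] h c by (simp add: dist_commute)
    then have "y \<in> ball x (1 / a ^ n) \<inter> ball y (1 / a ^ m) \<inter> X" using yX a by (simp add: mem_ball)
    then have ne: "ball x (1 / a ^ n) \<inter> ball y (1 / a ^ m) \<inter> X \<noteq> {}" by blast
    have "D1edge X a lam Xs (x, n) (y, m)" unfolding D1edge_def Let_def fst_conv snd_conv
      using base uv h(1) ne by blast
    then have ?thesis using uv by simp }
  moreover
  { assume h: "n = Suc m" "par x n = y"
    have xX: "x \<in> X" using hf_sub[OF hf] c by auto
    have "dist y x < 1 / a ^ m" using hf_par[OF hf a, of x m] h c by (simp add: dist_commute)
    then have "x \<in> ball x (1 / a ^ n) \<inter> ball y (1 / a ^ m) \<inter> X" using xX a by (simp add: mem_ball)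
    then have ne: "ball x (1 / a ^ n) \<inter> ball y (1 / a ^ m) \<inter> X \<noteq> {}" by blast
    have "D1edge X a lam Xs (x, n) (y, m)" unfolding D1edge_def Let_def fst_conv snd_conv
      using base uv h(1) ne by blast
    then have ?thesis using uv by simp }
  moreover
  { assume h: "n = m"
    have ?thesis using E h uv unfolding D1edge_def D2edge_def Let_def by auto }
  ultimately show ?thesis using c by blast
qed

lemma partD1:
  assumes hf: "hyp_filling X a Xs par" and a: "a > 1"
  shows "D1 X a lam Xs u v \<le> D2 X a lam Xs par u v"
  unfolding D1_def D2_def gdist_def
proof (rule Inf_superset_mono, safe)
  fix k assume "(D2edge X a lam Xs par ^^ k) u v"
  then have "(D1edge X a lam Xs ^^ k) u v"
    by (rule relpowp_mono_rel[rotated]) (rule D2edge_D1edge[OF hf a])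
  then show "\<exists>k'. enat k = enat k' \<and> (D1edge X a lam Xs ^^ k') u v" by blast
qed

lemma D1edge_D2path:
  assumes hf: "hyp_filling X a Xs par" and a: "a > 1" and lam: "lam > 1 + 1 / a"
    and E: "D1edge X a lam Xs u v"
  shows "\<exists>j\<le>2. (D2edge X a lam Xs par ^^ j) u v"
proof -
  obtain x n y m where uv: "u = (x, n)" "v = (y, m)" by (cases u, cases v) auto
  note c = D1edge_cases[OF E[unfolded uv]]
  { assume h: "n = m"
    have "D2edge X a lam Xs par u v" using E h uv unfolding D1edge_def D2edge_def Let_def by auto
    then have ?thesis by (intro exI[of _ 1]) (auto intro: path1) }
  moreover
  { assume h: "n = Suc m"
    have "dist x y < 1 / a ^ Suc m + 1 / a ^ m" using c h by simp
    then have vc: "D2edge X a lam Xs par (x, Suc m) (par x (Suc m), m) \<and>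
       (par x (Suc m) = y \<or> D2edge X a lam Xs par (par x (Suc m), m) (y, m))"
      using vert_close[OF hf a lam, of x m y] c h by auto
    then have ?thesis
    proof (cases "par x (Suc m) = y")
      case True
      then show ?thesis using vc h uv by (intro exI[of _ 1]) (auto intro: path1)
    next
      case False
      then show ?thesis using vc h uv by (intro exI[of _ 2]) (auto intro: path2)
    qed }
  moreover
  { assume h: "m = Suc n"
    have "dist y x < 1 / a ^ Suc n + 1 / a ^ n" using c h by (simp add: dist_commute add.commute)
    then have vc: "D2edge X a lam Xs par (y, Suc n) (par y (Suc n), n) \<and>
       (par y (Suc n) = x \<or> D2edge X a lam Xs par (par y (Suc n), n) (x, n))"
      using vert_close[OF hf a lam, of y n x] c h by auto
    then have ?thesis
    proof (cases "par y (Suc n) = x")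
      case True
      then show ?thesis using vc h uv by (intro exI[of _ 1]) (auto intro: path1 D2edge_sym)
    next
      case False
      then show ?thesis using vc h uv by (intro exI[of _ 2]) (auto intro: path2 D2edge_sym)
    qed }
  ultimately show ?thesis using c by blast
qed

lemma partD2:
  assumes hf: "hyp_filling X a Xs par" and a: "a > 1" and lam: "lam > 1 + 1 / a"
  shows "D2 X a lam Xs par u v \<le> 2 * D1 X a lam Xs u v"
proof (cases "D1 X a lam Xs u v")
  case infinity
  then show ?thesis by (simp add: numeral_eq_enat)
next
  case (enat k)
  then obtain j where j: "j \<le> k" "(D1edge X a lam Xs ^^ j) u v"
    using gdist_leD[of "D1edge X a lam Xs" u v k] unfolding D1_def by auto
  obtain j' where j': "j' \<le> 2 * j" "(D2edge X a lam Xs par ^^ j') u v"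
    using relpowp_double[OF D1edge_D2path[OF hf a lam] j(2)] by blast
  have "D2 X a lam Xs par u v \<le> enat j'" unfolding D2_def by (rule gdist_le[OF j'(2)])
  also have "\<dots> \<le> enat (2 * k)" using j j' by simp
  also have "\<dots> = 2 * D1 X a lam Xs u v" using enat by (simp add: numeral_eq_enat)
  finally show ?thesis .
qed

lemma partE:
  assumes hf: "hyp_filling X a Xs par" and a: "a > 1" and lam: "lam > 1 + 1 / a"
    and w: "w \<in> Sset Xs" "snd w = Suc n" and u: "u \<in> Sset Xs" "snd u = n"
    and v: "v \<in> Sset Xs" "snd v = n"
    and d1: "D1 X a lam Xs u w = 1" and d2: "D2 X a lam Xs par v w = 1"
  shows "D2 X a lam Xs par u v \<le> 1"
proof -
  obtain ux vx wx where defs: "u = (ux, n)" "v = (vx, n)" "w = (wx, Suc n)"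
    using u v w by (cases u, cases v, cases w) auto
  have E1: "D1edge X a lam Xs (ux, n) (wx, Suc n)" using gdist_1D d1 defs unfolding D1_def by metis
  have E2: "D2edge X a lam Xs par (vx, n) (wx, Suc n)" using gdist_1D d2 defs unfolding D2_def by metis
  note c1 = D1edge_cases[OF E1]
  note c2 = D2edge_cases[OF E2]
  have pv: "par wx (Suc n) = vx" using c2 by auto
  have "dist wx ux < 1 / a ^ Suc n + 1 / a ^ n" using c1 by (simp add: dist_commute add.commute)
  then have vc: "par wx (Suc n) = ux \<or> D2edge X a lam Xs par (par wx (Suc n), n) (ux, n)"
    using vert_close[OF hf a lam, of wx n ux] c1 by auto
  show ?thesis
  proof (cases "vx = ux")
    case True
    then show ?thesis using same_parent_D2 defs by simp
  next
    case False
    then have "D2edge X a lam Xs par (ux, n) (vx, n)" using vc pv D2edge_sym by metis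
    then have "D2 X a lam Xs par u v \<le> enat 1" unfolding D2_def defs by (intro gdist_le path1)
    then show ?thesis by (simp add: one_enat_def)
  qed
qed

theorem lemma2p4:
  fixes X :: "'a::metric_space set" and a lam :: real
    and Xs :: "nat \<Rightarrow> 'a set" and par :: "'a \<Rightarrow> nat \<Rightarrow> 'a"
  assumes "compact X" and "diameter X = 1 / 2"
    and "lam > 1" and "a > 1"
    and "hyp_filling X a Xs par"
  shows
    \<comment> \<open>(a)\<close>
    "(\<forall>n x z. x \<in> Xs n \<and> z \<in> Xs (Suc n) \<and> par z (Suc n) = x \<longrightarrow> dist x z < 1 / a ^ n)
     \<and> (\<forall>n k x y. x \<in> Xs n \<and> y \<in> Xs k \<and> descendant par (y, k) (x, n)
          \<longrightarrow> dist x y < a / (a - 1) * (1 / a ^ n))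
     \<comment> \<open>(b)\<close>
     \<and> (\<forall>n x y. x \<in> Xs (Suc n) \<and> y \<in> Xs (Suc n) \<and> lam \<ge> 2 + 2 * lam / a
          \<and> D2 X a lam Xs par (x, Suc n) (y, Suc n) \<le> 1
          \<longrightarrow> D2 X a lam Xs par (par x (Suc n), n) (par y (Suc n), n) \<le> 1)
     \<and> (\<forall>n x y. x \<in> Xs (Suc n) \<and> y \<in> Xs (Suc n) \<and> lam \<ge> 2 + 4 * lam / a
          \<and> D2 X a lam Xs par (x, Suc n) (y, Suc n) \<le> 2
          \<longrightarrow> D2 X a lam Xs par (par x (Suc n), n) (par y (Suc n), n) \<le> 1)
     \<comment> \<open>(c)\<close>
     \<and> (\<forall>n x y. lam \<ge> 6 \<and> x \<in> Xs (Suc n) \<and> y \<in> Xs (Suc n) \<and> dist x y \<le> 4 / a ^ n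
          \<longrightarrow> D2 X a lam Xs par (par x (Suc n), n) (par y (Suc n), n) \<le> 1)
     \<comment> \<open>(d)\<close>
     \<and> (lam > 1 + 1 / a \<longrightarrow> (\<forall>u\<in>Sset Xs. \<forall>v\<in>Sset Xs.
          D1 X a lam Xs u v \<le> D2 X a lam Xs par u v
          \<and> D2 X a lam Xs par u v \<le> 2 * D1 X a lam Xs u v))
     \<comment> \<open>(e)\<close>
     \<and> (lam > 1 + 1 / a \<longrightarrow> (\<forall>n u v w. w \<in> Sset Xs \<and> snd w = Suc n
          \<and> u \<in> Sset Xs \<and> snd u = n \<and> v \<in> Sset Xs \<and> snd v = n
          \<and> D1 X a lam Xs u w = 1 \<and> D2 X a lam Xs par v w = 1
          \<longrightarrow> D2 X a lam Xs par u v \<le> 1))"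
proof -
  have a: "a > 1" and hf: "hyp_filling X a Xs par" and lam1: "lam > 1" using assms by auto
  show ?thesis
    apply (intro conjI allI impI ballI)
    subgoal using partA1[OF hf a] by blast
    subgoal using partA2[OF hf a] by blast
    subgoal using partB1[OF hf a lam1] by blast
    subgoal using partB2[OF hf a lam1] by blast
    subgoal using partC[OF hf a] by blast
    subgoal using partD1[OF hf a] by blast
    subgoal using partD2[OF hf a] by blast
    subgoal using partE[OF hf a] by blast
    done
qed

end
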